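(* Let $\mathcal{X}$ be a compact Polish space and $(\mathcal{Y},d_{\mathcal{Y}})$ a separable metric space. Then there is a metric $d_{\mathcal{X}}$ on $\mathcal{X}$ generating the topology of $\mathcal{X}$ such that the set of Lipschitz maps from $(\mathcal{X},d_{\mathcal{X}})$ to $(\mathcal{Y},d_{\mathcal{Y}})$ is uniformly dense in $C(\mathcal{X},\mathcal{Y})$.
   Context: $C(\mathcal{X},\mathcal{Y})$ is the set of continuous maps, with the topology of uniform convergence. *)

theory Defs
  imports "HOL-Analysis.Analysis"
begin

definition Polish_space :: "'a topology \<Rightarrow> bool" where
  "Polish_space X \<longleftrightarrow> completely_metrizable_space X \<and> separable_space X"

end

theory Submission
  imports Defs
begin

lemma metric_construct:
  fixes X :: "'a topology" and m :: "'b metric" and d :: "'a \<Rightarrow> 'a \<Rightarrow> real" and gs :: "nat \<Rightarrow> 'a \<Rightarrow> 'b"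
  assumes Md: "Metric_space (topspace X) d" and MX: "Metric_space.mtopology (topspace X) d = X"
    and cX: "compact_space X"
    and gc: "\<And>n. continuous_map X (mtopology_of m) (gs n)"
  shows "\<exists>d'. Metric_space (topspace X) d' \<and> Metric_space.mtopology (topspace X) d' = X \<and>
     (\<forall>n. Lipschitz_continuous_map (metric (topspace X, d')) m (gs n))"
proof -
  interpret Md: Metric_space "topspace X" d by (rule Md)
  interpret Mm: Metric_space "mspace m" "mdist m" by simp
  have MmX: "Mm.mtopology = mtopology_of m" by (simp add: mtopology_of_def)
  have "\<exists>B>0. \<forall>x\<in>topspace X. \<forall>y\<in>topspace X. mdist m (gs n x) (gs n y) \<le> B" for n
  proof -
    have "compactin (mtopology_of m) (gs n ` topspace X)"
      using image_compactin[OF cX[unfolded compact_space_def] gc[of n]] .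
    then have "Mm.mbounded (gs n ` topspace X)" 
      using Mm.compactin_imp_mbounded MmX by simp
    then obtain B where "\<forall>x\<in>gs n ` topspace X. \<forall>y\<in>gs n ` topspace X. mdist m x y \<le> B"
      unfolding Mm.mbounded_alt by blast
    then show ?thesis
      by (intro exI[of _ "max B 1"]) fastforce
  qed
  then obtain Bd where Bd: "\<And>n. Bd n > 0"
    "\<And>n x y. x\<in>topspace X \<Longrightarrow> y\<in>topspace X \<Longrightarrow> mdist m (gs n x) (gs n y) \<le> Bd n"
    by metis
  define w where "w x y n = (1/2::real)^n * min 1 (mdist m (gs n x) (gs n y) / Bd n)" for x y n
  have w0: "0 \<le> w x y n" for x y n using Bd(1)[of n] by (simp add: w_def)
  have w1: "w x y n \<le> (1/2)^n" for x y n
    unfolding w_def by (intro mult_left_le) auto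
  have ws: "summable (w x y)" for x y
    by (rule summable_comparison_test'[where g="\<lambda>n. (1/2::real)^n" and N=0]) 
       (use w0 w1 in auto)
  have ws0: "0 \<le> suminf (w x y)" for x y
    using ws w0 by (simp add: suminf_nonneg)
  define d' where "d' x y = d x y + suminf (w x y)" for x y
  have dd': "d x y \<le> d' x y" for x y using ws0 by (simp add: d'_def)
  have imgm: "gs n x \<in> mspace m" if "x \<in> topspace X" for n x
    using gc[of n] that unfolding continuous_map_def by auto
  have wtri: "w x z n \<le> w x y n + w y z n" 
    if "x \<in> topspace X" "y \<in> topspace X" "z \<in> topspace X" for x y z n
  proof -
    have t: "mdist m (gs n x) (gs n z) \<le> mdist m (gs n x) (gs n y) + mdist m (gs n y) (gs n z)"
      using imgm that by (simp add: mdist_triangle)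
    have "min 1 (mdist m (gs n x) (gs n z) / Bd n) \<le> 
          min 1 (mdist m (gs n x) (gs n y) / Bd n) + min 1 (mdist m (gs n y) (gs n z) / Bd n)"
    proof -
      have "mdist m (gs n x) (gs n z) / Bd n \<le> mdist m (gs n x) (gs n y) / Bd n + mdist m (gs n y) (gs n z) / Bd n"
        using t Bd(1)[of n] by (simp add: add_divide_distrib[symmetric] divide_right_mono)
      moreover have "0 \<le> mdist m (gs n x) (gs n y) / Bd n" "0 \<le> mdist m (gs n y) (gs n z) / Bd n"
        using Bd(1)[of n] by auto
      ultimately show ?thesis by linarith
    qed
    then show ?thesis unfolding w_def
      by (simp add: distrib_left[symmetric])
  qed
  have Md': "Metric_space (topspace X) d'"
  proof
    show "0 \<le> d' x y" for x y using ws0 by (simp add: d'_def)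
    show "d' x y = d' y x" for x y
      unfolding d'_def w_def by (simp add: Md.commute mdist_commute)
    show "d' x y = 0 \<longleftrightarrow> x = y" if "x \<in> topspace X" "y \<in> topspace X" for x y
    proof
      assume "d' x y = 0"
      then have "d x y = 0" using ws0[of x y] Md.nonneg[of x y] unfolding d'_def by linarith
      then show "x = y" using that by simp
    next
      assume "x = y"
      moreover have "w y y = (\<lambda>n. 0)" using imgm that by (simp add: fun_eq_iff w_def)
      ultimately show "d' x y = 0" using that by (simp add: d'_def)
    qed
    show "d' x z \<le> d' x y + d' y z" if "x \<in> topspace X" "y \<in> topspace X" "z \<in> topspace X" for x y z
    proof -
      have "suminf (w x z) \<le> (\<Sum>n. w x y n + w y z n)"
        by (rule suminf_le) (use wtri[OF that] ws in \<open>auto intro: summable_add\<close>)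
      also have "\<dots> = suminf (w x y) + suminf (w y z)" using ws by (simp add: suminf_add)
      finally show ?thesis using Md.triangle[OF that] by (simp add: d'_def)
    qed
  qed
  interpret Md': Metric_space "topspace X" d' by (rule Md')
  have "openin X U \<longleftrightarrow> openin Md'.mtopology U" for U
  proof
    assume "openin X U"
    then have "openin Md.mtopology U" using MX by simp
    then show "openin Md'.mtopology U"
      unfolding Md.openin_mtopology Md'.openin_mtopology
      by (meson Md'.in_mball Md.in_mball dd' order.strict_trans1 subset_eq)
  next
    assume U: "openin Md'.mtopology U"
    show "openin X U"
    proof (subst openin_subopen, intro ballI)
      fix x assume xU: "x \<in> U"
      with U obtain r where r: "r > 0" "Md'.mball x r \<subseteq> U"
        unfolding Md'.openin_mtopology by blast
      have xX: "x \<in> topspace X" using U xU Md'.openin_mtopology by blast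
      obtain N where N: "(1/2::real)^N < r/4" using real_arch_pow_inv[of "r/4" "1/2"] r by auto
      define \<epsilon> where "\<epsilon> = r / (2 * (real N + 1))"
      have \<epsilon>: "\<epsilon> > 0" using r by (simp add: \<epsilon>_def)
      define V where "V = Md.mball x \<epsilon> \<inter> ((\<Inter>n\<in>{..<N}. {z\<in>topspace X. gs n z \<in> Mm.mball (gs n x) (\<epsilon> * Bd n)}) \<inter> topspace X)"
      have o1: "openin X (Md.mball x \<epsilon>)" using MX Md.openin_mball by metis
      have o2: "openin X {z \<in> topspace X. gs n z \<in> Mm.mball (gs n x) (\<epsilon> * Bd n)}" for n
        by (rule openin_continuous_map_preimage[OF gc]) (simp add: MmX[symmetric])
      have "openin X V" unfolding V_def using o1 o2 by (intro openin_Int openin_INT) auto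
      moreover have "x \<in> V" unfolding V_def using xX \<epsilon> Bd(1) imgm[OF xX] by auto
      moreover have "V \<subseteq> Md'.mball x r"
      proof
        fix z assume zV: "z \<in> V"
        then have zX: "z \<in> topspace X" and dz: "d x z < \<epsilon>"
          and gz: "\<And>n. n < N \<Longrightarrow> mdist m (gs n x) (gs n z) < \<epsilon> * Bd n"
          unfolding V_def by auto
        have wn: "w x z n \<le> \<epsilon>" if "n < N" for n
        proof -
          have "mdist m (gs n x) (gs n z) / Bd n < \<epsilon>"
            using gz[OF that] Bd(1)[of n] by (simp add: divide_less_eq)
          then have "min 1 (mdist m (gs n x) (gs n z) / Bd n) \<le> \<epsilon>" by linarith
          moreover have "(1/2::real)^n \<le> 1" by (simp add: power_le_one)
          moreover have "0 \<le> min 1 (mdist m (gs n x) (gs n z) / Bd n)" using Bd(1)[of n] by simp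
          ultimately have "(1/2::real)^n * min 1 (mdist m (gs n x) (gs n z) / Bd n) \<le> min 1 (mdist m (gs n x) (gs n z) / Bd n)"
            by (intro mult_left_le_one_le) auto
          then show ?thesis unfolding w_def using \<open>min 1 _ \<le> \<epsilon>\<close> by linarith
        qed
        have "suminf (w x z) = (\<Sum>k. w x z (k + N)) + (\<Sum>n<N. w x z n)"
          using ws by (rule suminf_split_initial_segment)
        also have "(\<Sum>k. w x z (k + N)) \<le> (\<Sum>k. (1/2::real)^N * (1/2)^k)"
        proof (rule suminf_le)
          show "w x z (k + N) \<le> (1/2::real)^N * (1/2)^k" for k
            using w1[of x z "k+N"] by (simp add: power_add mult.commute)
          show "summable (\<lambda>k. w x z (k + N))" using ws by (rule summable_ignore_initial_segment)
          show "summable (\<lambda>k. (1/2::real)^N * (1/2)^k)" by (intro summable_mult summable_geometric) simp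
        qed
        also have "\<dots> = (1/2)^N * 2"
          by (simp add: suminf_mult summable_geometric suminf_geometric)
        also have "(\<Sum>n<N. w x z n) \<le> (\<Sum>n<N. \<epsilon>)"
          by (rule sum_mono) (use wn in auto)
        finally have "suminf (w x z) \<le> (1/2)^N * 2 + N * \<epsilon>" by simp
        then have lt: "d' x z < \<epsilon> + (1/2)^N * 2 + N * \<epsilon>" using dz by (simp add: d'_def)
        have nz: "2 * (real N + 1) \<noteq> 0" by simp
        have e2: "\<epsilon> * (2 * (real N + 1)) = r" using nz \<epsilon>_def nonzero_eq_divide_eq by blast
        have "\<epsilon> + N * \<epsilon> = r / 2" using e2 by (simp add: algebra_simps)
        then have "d' x z < r" using N lt by linarith
        then show "z \<in> Md'.mball x r" using xX zX by simp
      qed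
      ultimately show "\<exists>V. openin X V \<and> x \<in> V \<and> V \<subseteq> U" using r by blast
    qed
  qed
  then have top: "Md'.mtopology = X" by (simp add: topology_eq)
  have "Lipschitz_continuous_map (metric (topspace X, d')) m (gs n)" for n
    unfolding Lipschitz_continuous_map_def Md'.mspace_metric Md'.mdist_metric
  proof (intro conjI exI ballI)
    show "gs n \<in> topspace X \<rightarrow> mspace m" using imgm by auto
    fix x y assume xy: "x \<in> topspace X" "y \<in> topspace X"
    have "mdist m (gs n x) (gs n y) / Bd n \<le> 1"
      using Bd(1)[of n] Bd(2)[OF xy, of n] by (simp add: divide_le_eq_1)
    then have "mdist m (gs n x) (gs n y) = Bd n * 2^n * w x y n"
      using Bd(1)[of n] by (simp add: w_def power_one_over field_simps)
    also have "w x y n \<le> suminf (w x y)"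
      using sum_le_suminf[OF ws, of "{n}"] w0 by simp
    also have "suminf (w x y) \<le> d' x y" by (simp add: d'_def)
    finally show "mdist m (gs n x) (gs n y) \<le> Bd n * 2^n * d' x y"
      using Bd(1)[of n] by (simp add: mult_left_mono)
  qed
  with top Md' show ?thesis by blast
qed
theorem mainTheorem9:
  fixes X :: "'a topology" and m :: "'b metric"
  assumes "compact_space X" and "Polish_space X"
    and "separable_space (mtopology_of m)"
  shows "\<exists>dX. Metric_space (topspace X) dX \<and> Metric_space.mtopology (topspace X) dX = X \<and>
    (\<forall>f. continuous_map X (mtopology_of m) f \<longrightarrow>
       (\<forall>e>0. \<exists>g. Lipschitz_continuous_map (metric (topspace X, dX)) m g \<and>
                  (\<forall>x\<in>topspace X. mdist m (f x) (g x) < e)))"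
proof -
  have "metrizable_space X" using assms(2) completely_metrizable_imp_metrizable_space
    unfolding Polish_space_def by blast
  then obtain M d where "Metric_space M d" and XM: "X = Metric_space.mtopology M d"
    unfolding metrizable_space_def by blast
  then have MX0: "M = topspace X" by (simp add: Metric_space.topspace_mtopology)
  have Md: "Metric_space (topspace X) d" using \<open>Metric_space M d\<close> MX0 by simp
  have MX: "Metric_space.mtopology (topspace X) d = X" using XM MX0 by simp
  interpret Md: Metric_space "topspace X" d by (rule Md)
  interpret Mm: Metric_space "mspace m" "mdist m" by simp
  have MmX: "Mm.mtopology = mtopology_of m" by (simp add: mtopology_of_def)
  show ?thesis
  proof (cases "\<exists>f0. continuous_map X (mtopology_of m) f0")
    case False
    then show ?thesis using Md MX by blast
  next
    case True
    then obtain f0 where f0: "continuous_map X (mtopology_of m) f0" by blast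
    obtain D where D: "countable D" "D \<subseteq> topspace X" "X closure_of D = topspace X"
      using assms(2) unfolding Polish_space_def separable_space_def by blast
    obtain C where C: "countable C" "C \<subseteq> mspace m" "mtopology_of m closure_of C = mspace m"
      using assms(3) unfolding separable_space_def by auto
    define xs where "xs a = from_nat_into D a" for a
    define cs where "cs k = from_nat_into C k" for k
    define Bl where "Bl a b = Md.mball (xs a) (1 / real (Suc b))" for a b
    define Cond :: "nat \<times> (nat \<times> nat \<times> nat) list \<Rightarrow> ('a \<Rightarrow> 'b) \<Rightarrow> bool" where
      "Cond p g \<longleftrightarrow> continuous_map X (mtopology_of m) g \<and>
         (\<forall>t\<in>set (snd p). \<forall>z\<in>Bl (fst t) (fst (snd t)). mdist m (cs (snd (snd t))) (g z) < 1 / real (Suc (fst p)))"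
      for p g
    define gs where "gs n = (if \<exists>g. Cond (from_nat n) g then SOME g. Cond (from_nat n) g else f0)" for n
    have gsC: "Cond (from_nat n) (gs n)" if "\<exists>g. Cond (from_nat n) g" for n
      using that unfolding gs_def by (simp add: someI_ex)
    have gc: "continuous_map X (mtopology_of m) (gs n)" for n
      using gsC[of n] f0 unfolding gs_def Cond_def by auto
    obtain d' where d': "Metric_space (topspace X) d'" "Metric_space.mtopology (topspace X) d' = X"
      "\<And>n. Lipschitz_continuous_map (metric (topspace X, d')) m (gs n)"
      using metric_construct[where gs=gs, OF Md MX assms(1) gc] by blast
    have dense: "\<exists>n. \<forall>x\<in>topspace X. mdist m (f x) (gs n x) < e"
      if f: "continuous_map X (mtopology_of m) f" and e: "e > 0" for f e
    proof -
      obtain j where j: "2 / real (Suc j) < e" 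
        using reals_Archimedean[of "e/2"] e by (auto simp: field_simps)
      define \<delta> where "\<delta> = 1 / (2 * real (Suc j))"
      have \<delta>: "\<delta> > 0" by (simp add: \<delta>_def)
      have fm: "f x \<in> mspace m" if "x \<in> topspace X" for x
        using f that unfolding continuous_map_def by auto
      have Cne: "C \<noteq> {}" if "x \<in> topspace X" for x
        using C(3) fm[OF that] by auto
      have cover: "\<exists>a b k. x \<in> Bl a b \<and> (\<forall>z\<in>Bl a b. mdist m (cs k) (f z) < 1 / real (Suc j))"
        if x: "x \<in> topspace X" for x
      proof -
        have "f x \<in> Mm.mtopology closure_of C" using C(3) MmX fm[OF x] by simp
        then obtain c where c: "c \<in> C" "c \<in> Mm.mball (f x) \<delta>"
          unfolding Mm.metric_closure_of using \<delta> by blast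
        define k where "k = to_nat_on C c"
        have ck: "cs k = c" using c C(1) by (simp add: cs_def k_def)
        have "openin X {z \<in> topspace X. f z \<in> Mm.mball (f x) \<delta>}"
          by (rule openin_continuous_map_preimage[OF f]) (simp add: MmX[symmetric])
        then have "openin Md.mtopology {z \<in> topspace X. f z \<in> Mm.mball (f x) \<delta>}" using MX by simp
        moreover have "x \<in> {z \<in> topspace X. f z \<in> Mm.mball (f x) \<delta>}" using x fm[OF x] \<delta> by simp
        ultimately obtain r where r: "r > 0" "Md.mball x r \<subseteq> {z \<in> topspace X. f z \<in> Mm.mball (f x) \<delta>}"
          unfolding Md.openin_mtopology by blast
        obtain b where b: "inverse (real (Suc b)) < r / 2" using reals_Archimedean[of "r/2"] r by auto
        have "x \<in> Md.mtopology closure_of D" using D(3) x MX by simp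
        then have "\<forall>r>0. \<exists>y\<in>D. y \<in> Md.mball x r" unfolding Md.metric_closure_of by blast
        moreover have "(0::real) < 1 / real (Suc b)" by simp
        ultimately obtain y where y: "y \<in> D" "y \<in> Md.mball x (1 / real (Suc b))" by blast
        define a where "a = to_nat_on D y"
        have ya: "xs a = y" using y D(1) by (simp add: xs_def a_def)
        have "x \<in> Bl a b" using y ya x unfolding Bl_def by (simp add: Md.commute)
        moreover have "mdist m (cs k) (f z) < 1 / real (Suc j)" if z: "z \<in> Bl a b" for z
        proof -
          have zX: "z \<in> topspace X" and dz: "d y z < 1 / real (Suc b)" using z ya unfolding Bl_def by auto
          have "d x z \<le> d x y + d y z" using Md.triangle y zX x D(2) by auto
          also have "\<dots> < 2 / real (Suc b)" using y dz by simp
          also have "\<dots> < r" using b by (simp add: field_simps)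
          finally have "z \<in> Md.mball x r" using x zX by simp
          then have "mdist m (f x) (f z) < \<delta>" using r by auto
          moreover have "mdist m c (f x) < \<delta>" using c by (simp add: Mm.commute)
          moreover have "mdist m c (f z) \<le> mdist m c (f x) + mdist m (f x) (f z)"
            using Mm.triangle c fm x zX C(2) by auto
          moreover have "\<delta> + \<delta> = 1 / real (Suc j)" unfolding \<delta>_def by (simp add: field_simps add_pos_pos)
          ultimately show ?thesis unfolding ck by linarith
        qed
        ultimately show ?thesis by blast
      qed
      define \<U> where "\<U> = {Bl a b | a b. \<exists>k. \<forall>z\<in>Bl a b. mdist m (cs k) (f z) < 1 / real (Suc j)}"
      have oB: "openin X (Bl a b)" for a b unfolding Bl_def using Md.openin_mball MX by metis
      have o\<U>: "\<forall>U\<in>\<U>. openin X U"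
      proof
        fix U assume "U \<in> \<U>"
        then obtain a b where "U = Bl a b" unfolding \<U>_def by blast
        then show "openin X U" using oB by simp
      qed
      have c\<U>: "topspace X \<subseteq> \<Union>\<U>"
      proof
        fix x assume "x \<in> topspace X"
        then obtain a b k where abk: "x \<in> Bl a b" "\<forall>z\<in>Bl a b. mdist m (cs k) (f z) < 1 / real (Suc j)"
          using cover by blast
        then have "Bl a b \<in> \<U>" unfolding \<U>_def by blast
        with abk(1) show "x \<in> \<Union>\<U>" by blast
      qed
      have "((\<forall>U\<in>\<U>. openin X U) \<and> topspace X \<subseteq> \<Union>\<U>) \<longrightarrow> (\<exists>F. finite F \<and> F \<subseteq> \<U> \<and> topspace X \<subseteq> \<Union>F)"
        using assms(1) unfolding compact_space_alt by (rule spec)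
      then have "\<exists>F. finite F \<and> F \<subseteq> \<U> \<and> topspace X \<subseteq> \<Union>F" using o\<U> c\<U> by blast
      then obtain F where F: "finite F" "F \<subseteq> \<U>" "topspace X \<subseteq> \<Union>F" by blast
      have "\<exists>t. Bl (fst t) (fst (snd t)) = U \<and> (\<forall>z\<in>U. mdist m (cs (snd (snd t))) (f z) < 1 / real (Suc j))"
        if U: "U \<in> F" for U
      proof -
        obtain a b k where "U = Bl a b" "\<forall>z\<in>Bl a b. mdist m (cs k) (f z) < 1 / real (Suc j)"
          using F(2) U unfolding \<U>_def by blast
        then show ?thesis by (intro exI[of _ "(a,b,k)"]) simp
      qed
      then obtain p where p: "\<And>U. U \<in> F \<Longrightarrow> Bl (fst (p U)) (fst (snd (p U))) = U \<and> (\<forall>z\<in>U. mdist m (cs (snd (snd (p U)))) (f z) < 1 / real (Suc j))"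
        by metis
      obtain lF where lF: "set lF = F" using finite_list F(1) by blast
      define L where "L = map p lF"
      have "Cond (j, L) f" unfolding Cond_def L_def using f p lF by auto
      define n where "n = to_nat (j, L)"
      have fn: "from_nat n = (j, L)" by (simp add: n_def)
      have gC: "Cond (j, L) (gs n)" using gsC[of n] \<open>Cond (j, L) f\<close> fn by auto
      have "mdist m (f x) (gs n x) < e" if x: "x \<in> topspace X" for x
      proof -
        obtain U where U: "U \<in> F" "x \<in> U" using F(3) x by blast
        have pL: "p U \<in> set L" using U lF by (simp add: L_def)
        have xB: "x \<in> Bl (fst (p U)) (fst (snd (p U)))" using p[OF U(1)] U(2) by simp
        have 1: "mdist m (cs (snd (snd (p U)))) (f x) < 1 / real (Suc j)" using p[OF U(1)] U(2) by blast
        have gC': "\<forall>t\<in>set L. \<forall>z\<in>Bl (fst t) (fst (snd t)). mdist m (cs (snd (snd t))) (gs n z) < 1 / real (Suc j)"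
          using gC unfolding Cond_def by simp
        have 2: "mdist m (cs (snd (snd (p U)))) (gs n x) < 1 / real (Suc j)"
          using gC'[rule_format, OF pL xB] .
        have csm: "cs (snd (snd (p U))) \<in> mspace m" 
          unfolding cs_def using from_nat_into[OF Cne[OF x]] C(2) by blast
        have gm: "gs n x \<in> mspace m" using gc[of n] x unfolding continuous_map_def by auto
        have tri: "mdist m (f x) (gs n x) \<le> mdist m (f x) (cs (snd (snd (p U)))) + mdist m (cs (snd (snd (p U)))) (gs n x)"
          using Mm.triangle[OF fm[OF x] csm gm] .
        have cm: "mdist m (f x) (cs (snd (snd (p U)))) = mdist m (cs (snd (snd (p U)))) (f x)"
          by (rule mdist_commute)
        have "1 / real (Suc j) + 1 / real (Suc j) = 2 / real (Suc j)" by simp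
        then show ?thesis using 1 2 j tri cm by linarith
      qed
      then show ?thesis by blast
    qed
    show ?thesis
    proof (intro exI[of _ d'] conjI allI impI)
      fix f :: "'a \<Rightarrow> 'b" and e :: real
      assume "continuous_map X (mtopology_of m) f" "e > 0"
      then obtain n where "\<forall>x\<in>topspace X. mdist m (f x) (gs n x) < e" using dense by blast
      then show "\<exists>g. Lipschitz_continuous_map (metric (topspace X, d')) m g \<and>
                  (\<forall>x\<in>topspace X. mdist m (f x) (g x) < e)" using d'(3) by blast
    qed (use d' in auto)
  qed
qed
end
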